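(* For $n\ge0$ and $k\in\mathbb Z$, $S_{n,k}(x)=A^\star_{n,k}(x+1)$, where for $k<n$ this holds for $|x|<1$ (as convergent power series); for $k\ge n$, $S_{n,k}$ is a polynomial. For all $n,k\ge\ell\ge0$, $$[x^\ell]\,S_{n,k}(x)=\frac{1}{\ell!}\frac{d^\ell}{dx^\ell}A^\star_{n,k}(x)\Big|_{x=1}=\sum_{\nu=0}^{\ell}\binom{k-n}{\ell-\nu}s_{n,\nu}.$$ If (R) holds and $k\ge n\ge0$, then $S_{n,k}$ is quasi-palindromic: $S_{n,k}(x)=(-1)^nx^kS_{n,k}(x^{-1})$. If moreover $n$ is odd and $k$ is even, then $[x^{k/2}]\,S_{n,k}(x)=0$.
   Context: Let $(\alpha_n)_{n\ge0}$ be an arbitrary sequence of complex numbers; its Appell polynomials are $A_n(x)=\sum_{\nu=0}^{n}\binom{n}{\nu}\alpha_{n-\nu}x^\nu$. For $n\ge0,k\in\mathbb Z$ let $A^\star_{n,k}(x)=x^kA_n(x^{-1})$. Let $s_{n,k}=\sum_{\nu=k}^{n}\binom{n}{\nu}\binom{\nu}{k}\alpha_\nu$ ($0\le k\le n$), $S_n(x)=\sum_{k=0}^n s_{n,k}x^k$, and define the formal power series $S_{n,k}(x)=S_n(x)(x+1)^{k-n}=S_n(x)\sum_{\nu\ge0}\binom{k-n}{\nu}x^\nu$ for $n\ge0$, $k\in\mathbb Z$ (generalized binomial coefficients). $[x^\ell]f(x)$ denotes the coefficient of $x^\ell$. Property (R) means $A_n(1-x)=(-1)^nA_n(x)$ for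 all $n\ge0$. *)

theory Defs
  imports "HOL-Analysis.Analysis" "HOL-Computational_Algebra.Computational_Algebra"
begin

definition A :: "(nat \<Rightarrow> complex) \<Rightarrow> nat \<Rightarrow> complex \<Rightarrow> complex" where
  "A \<alpha> n x = (\<Sum>\<nu>\<le>n. of_nat (n choose \<nu>) * \<alpha> (n - \<nu>) * x ^ \<nu>)"

definition A_star :: "(nat \<Rightarrow> complex) \<Rightarrow> nat \<Rightarrow> int \<Rightarrow> complex \<Rightarrow> complex" where
  "A_star \<alpha> n k x = x powi k * A \<alpha> n (inverse x)"

definition s :: "(nat \<Rightarrow> complex) \<Rightarrow> nat \<Rightarrow> nat \<Rightarrow> complex" where
  "s \<alpha> n k = (\<Sum>\<nu>=k..n. of_nat (n choose \<nu>) * of_nat (\<nu> choose k) * \<alpha> \<nu>)"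

definition S_poly :: "(nat \<Rightarrow> complex) \<Rightarrow> nat \<Rightarrow> complex poly" where
  "S_poly \<alpha> n = (\<Sum>k\<le>n. monom (s \<alpha> n k) k)"

definition S_fps :: "(nat \<Rightarrow> complex) \<Rightarrow> nat \<Rightarrow> int \<Rightarrow> complex fps" where
  "S_fps \<alpha> n k = fps_of_poly (S_poly \<alpha> n) * fps_binomial (of_int (k - int n))"

definition prop_R :: "(nat \<Rightarrow> complex) \<Rightarrow> bool" where
  "prop_R \<alpha> \<longleftrightarrow> (\<forall>n x. A \<alpha> n (1 - x) = (-1) ^ n * A \<alpha> n x)"

end

theory Submission imports Defs begin

lemma poly_S: "poly (S_poly \<alpha> n) z = (\<Sum>\<nu>\<le>n. of_nat (n choose \<nu>) * \<alpha> \<nu> * (1+z)^\<nu>)"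
proof -
  have s': "s \<alpha> n k = (\<Sum>\<nu>\<le>n. of_nat (n choose \<nu>) * of_nat (\<nu> choose k) * \<alpha> \<nu>)" if "k \<le> n" for k
    unfolding s_def by (rule sum.mono_neutral_left) auto
  have "poly (S_poly \<alpha> n) z = (\<Sum>k\<le>n. s \<alpha> n k * z^k)"
    by (simp add: S_poly_def poly_sum poly_monom)
  also have "\<dots> = (\<Sum>k\<le>n. \<Sum>\<nu>\<le>n. of_nat (n choose \<nu>) * \<alpha> \<nu> * (of_nat (\<nu> choose k) * z^k))"
    by (intro sum.cong refl) (simp add: s' sum_distrib_left sum_distrib_right mult_ac)
  also have "\<dots> = (\<Sum>\<nu>\<le>n. of_nat (n choose \<nu>) * \<alpha> \<nu> * (\<Sum>k\<le>n. of_nat (\<nu> choose k) * z^k))"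
    by (subst sum.swap) (simp add: sum_distrib_left)
  also have "\<dots> = (\<Sum>\<nu>\<le>n. of_nat (n choose \<nu>) * \<alpha> \<nu> * (1+z)^\<nu>)"
  proof (intro sum.cong refl)
    fix \<nu> assume "\<nu> \<in> {..n}"
    hence "(\<Sum>k\<le>n. of_nat (\<nu> choose k) * z^k) = (\<Sum>k\<le>\<nu>. of_nat (\<nu> choose k) * z^k)"
      by (intro sum.mono_neutral_right) auto
    also have "\<dots> = (z+1)^\<nu>" by (simp add: binomial_ring)
    finally show "of_nat (n choose \<nu>) * \<alpha> \<nu> * (\<Sum>k\<le>n. of_nat (\<nu> choose k) * z^k) = of_nat (n choose \<nu>) * \<alpha> \<nu> * (1+z)^\<nu>"
      by (simp add: add.commute)
  qed
  finally show ?thesis .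
qed

lemma Astar_eq: assumes "w \<noteq> 0"
  shows "A_star \<alpha> n k w = (\<Sum>\<nu>\<le>n. of_nat (n choose \<nu>) * \<alpha> \<nu> * w^\<nu>) * w powi (k - int n)"
proof -
  have "A_star \<alpha> n k w = w powi k * (\<Sum>\<nu>=0..n. of_nat (n choose \<nu>) * \<alpha> (n - \<nu>) * inverse w ^ \<nu>)"
    by (simp add: A_star_def A_def atMost_atLeast0)
  also have "(\<Sum>\<nu>=0..n. of_nat (n choose \<nu>) * \<alpha> (n - \<nu>) * inverse w ^ \<nu>)
      = (\<Sum>\<nu>=0..n. of_nat (n choose (n - \<nu>)) * \<alpha> (n - (n - \<nu>)) * inverse w ^ (n - \<nu>))"
    by (subst sum.atLeastAtMost_rev) simp
  also have "w powi k * \<dots> = (\<Sum>\<nu>=0..n. of_nat (n choose \<nu>) * \<alpha> \<nu> * w^\<nu> * w powi (k - int n))"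
    unfolding sum_distrib_left
  proof (intro sum.cong refl)
    fix \<nu> assume "\<nu> \<in> {0..n}"
    hence le: "\<nu> \<le> n" by simp
    have "w powi k * inverse w ^ (n - \<nu>) = w powi k * w powi (- int (n - \<nu>))"
      by (simp add: power_int_minus power_inverse)
    also have "\<dots> = w powi (k - int n + int \<nu>)"
      using assms le by (subst power_int_add[symmetric]) (auto simp: of_nat_diff algebra_simps)
    also have "\<dots> = w powi (k - int n) * w ^ \<nu>"
      using assms by (subst power_int_add) auto
    finally show "w powi k * (of_nat (n choose (n - \<nu>)) * \<alpha> (n - (n - \<nu>)) * inverse w ^ (n - \<nu>)) =
         of_nat (n choose \<nu>) * \<alpha> \<nu> * w ^ \<nu> * w powi (k - int n)"
      using le by (simp add: binomial_symmetric[OF le, symmetric] mult_ac)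
  qed
  finally show ?thesis by (simp add: sum_distrib_right atMost_atLeast0)
qed

lemma key: assumes "w \<noteq> 0"
  shows "A_star \<alpha> n k w = poly (S_poly \<alpha> n) (w - 1) * w powi (k - int n)"
  using Astar_eq[OF assms] by (simp add: poly_S)

lemma radius: "fps_conv_radius (S_fps \<alpha> n k) \<ge> 1"
proof -
  have "fps_conv_radius (fps_binomial (of_int (k - int n) :: complex)) \<ge> 1"
    by (simp add: fps_conv_radius_binomial)
  moreover have "fps_conv_radius (S_fps \<alpha> n k) \<ge> min (fps_conv_radius (fps_of_poly (S_poly \<alpha> n)))
      (fps_conv_radius (fps_binomial (of_int (k - int n) :: complex)))"
    unfolding S_fps_def by (rule fps_conv_radius_mult)
  ultimately show ?thesis by simp
qed

lemma evalS: assumes "norm z < 1"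
  shows "eval_fps (S_fps \<alpha> n k) z = A_star \<alpha> n k (z + 1)"
proof -
  have z1: "z + 1 \<noteq> 0"
  proof
    assume "z + 1 = 0"
    hence "z = -1" by (simp add: eq_neg_iff_add_eq_0)
    thus False using assms by simp
  qed
  have r: "norm z < fps_conv_radius (fps_binomial (of_int (k - int n) :: complex))"
    using assms by (simp add: fps_conv_radius_binomial)
  have "eval_fps (S_fps \<alpha> n k) z = poly (S_poly \<alpha> n) z * (1 + z) powr (of_int (k - int n))"
    unfolding S_fps_def using assms r
    by (subst eval_fps_mult) (auto simp: eval_fps_binomial)
  also have "\<dots> = poly (S_poly \<alpha> n) z * (z + 1) powi (k - int n)"
    using z1 by (subst complex_powr_of_int) (auto simp: add.commute)
  also have "\<dots> = A_star \<alpha> n k (z + 1)" using key[OF z1] by simp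
  finally show ?thesis .
qed

lemma rad_lt: "norm x < 1 \<Longrightarrow> ereal (norm x) < fps_conv_radius (S_fps \<alpha> n k)"
proof -
  assume "norm x < 1"
  hence "ereal (norm x) < 1" by simp
  thus ?thesis using radius[of \<alpha> n k] by (rule less_le_trans)
qed

lemma part1: "norm x < 1 \<Longrightarrow> (\<lambda>l. fps_nth (S_fps \<alpha> n k) l * x ^ l) sums A_star \<alpha> n k (x + 1)"
proof -
  assume x: "norm x < 1"
  have "(\<lambda>l. fps_nth (S_fps \<alpha> n k) l * x ^ l) sums eval_fps (S_fps \<alpha> n k) x"
    by (rule sums_eval_fps[OF rad_lt[OF x]])
  thus ?thesis using evalS[OF x] by simp
qed

lemma expansion: "(A_star \<alpha> n k \<circ> (\<lambda>x. 1 + x)) has_fps_expansion S_fps \<alpha> n k"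
proof -
  have "eventually (\<lambda>z::complex. z \<in> ball 0 1) (nhds 0)"
    by (intro eventually_nhds_in_open) auto
  moreover have "fps_conv_radius (S_fps \<alpha> n k) > 0"
    using rad_lt[of 0 \<alpha> n k] by (simp add: zero_ereal_def)
  ultimately show ?thesis unfolding has_fps_expansion_def
    by (auto elim!: eventually_mono simp: evalS add.commute)
qed

lemma part3a: "fps_nth (S_fps \<alpha> n k) l = (deriv ^^ l) (A_star \<alpha> n k) 1 / fact l"
  using fps_nth_fps_expansion[OF expansion, of \<alpha> n k l] higher_deriv_shift_0[of l "A_star \<alpha> n k" 1]
  by simp

lemma part3b: "l \<le> n \<Longrightarrow> fps_nth (S_fps \<alpha> n k) l = (\<Sum>\<nu>\<le>l. (of_int (k - int n) gchoose (l - \<nu>)) * s \<alpha> n \<nu>)"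
proof -
  assume l: "l \<le> n"
  have c: "coeff (S_poly \<alpha> n) \<nu> = s \<alpha> n \<nu>" if "\<nu> \<le> n" for \<nu>
    using that by (simp add: S_poly_def coeff_sum coeff_monom)
  show ?thesis unfolding S_fps_def fps_mult_nth atMost_atLeast0
    using l by (intro sum.cong refl) (simp add: c)
qed

lemma reflect_eq:
  fixes p :: "complex poly"
  assumes "degree p \<le> K" "x \<noteq> 0"
  shows "poly (\<Sum>i\<le>K. monom (coeff p (K - i)) i) x = x ^ K * poly p (inverse x)"
proof -
  have "poly p (inverse x) = (\<Sum>j\<le>K. coeff p j * inverse x ^ j)"
    unfolding poly_altdef using assms(1)
    by (intro sum.mono_neutral_left) (auto simp: coeff_eq_0)
  hence "x ^ K * poly p (inverse x) = (\<Sum>j=0..K. x ^ K * (coeff p j * inverse x ^ j))"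
    by (simp add: sum_distrib_left atMost_atLeast0)
  also have "\<dots> = (\<Sum>j=0..K. coeff p j * x ^ (K - j))"
    using assms(2) by (intro sum.cong refl) (auto simp: power_diff power_inverse field_simps)
  also have "\<dots> = (\<Sum>j=0..K. coeff p (K - j) * x ^ (K - (K - j)))"
    by (subst sum.atLeastAtMost_rev) simp
  also have "\<dots> = poly (\<Sum>i\<le>K. monom (coeff p (K - i)) i) x"
    by (simp add: poly_sum poly_monom atMost_atLeast0)
  finally show ?thesis ..
qed

lemma poly_eq_cofinite:
  fixes p q :: "complex poly"
  assumes "\<And>x. x \<noteq> 0 \<Longrightarrow> x \<noteq> -1 \<Longrightarrow> poly p x = poly q x"
  shows "p = q"
proof (rule ccontr)
  assume "p \<noteq> q"
  hence "p - q \<noteq> 0" by simp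
  hence fin: "finite {x. poly (p - q) x = 0}" by (rule poly_roots_finite)
  have "UNIV - {0, -1} \<subseteq> {x. poly (p - q) x = 0}" using assms by auto
  hence "finite (UNIV - {0, -1::complex})" using fin finite_subset by blast
  hence "finite (UNIV :: complex set)" by simp
  thus False using infinite_UNIV_char_0 by blast
qed

lemma part2:
  assumes kn: "k \<ge> int n"
  shows "\<exists>p. fps_of_poly p = S_fps \<alpha> n k
           \<and> (\<forall>x. x \<noteq> -1 \<longrightarrow> poly p x = A_star \<alpha> n k (x + 1))
           \<and> (prop_R \<alpha> \<longrightarrow>
                (\<forall>x. x \<noteq> 0 \<longrightarrow> poly p x = (-1) ^ n * x ^ nat k * poly p (inverse x)))
           \<and> (prop_R \<alpha> \<and> odd n \<and> even k \<longrightarrow> coeff p (nat k div 2) = 0)"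
proof -
  define K where "K = nat k"
  define m where "m = K - n"
  have kK: "k = int K" and Kn: "K \<ge> n" using kn by (auto simp: K_def)
  have km: "k - int n = int m" using kK Kn by (simp add: m_def)
  define p where "p = S_poly \<alpha> n * [:1, 1:] ^ m"
  have fp: "fps_of_poly p = S_fps \<alpha> n k"
    unfolding p_def S_fps_def km
    by (simp add: fps_of_poly_mult fps_of_poly_power fps_binomial_of_nat fps_of_poly_pCons add.commute)
  have pv: "poly p x = A_star \<alpha> n k (x + 1)" if "x \<noteq> -1" for x
  proof -
    have "x + 1 \<noteq> 0" using that by (metis eq_neg_iff_add_eq_0)
    thus ?thesis using key[of "x+1" \<alpha> n k] by (simp add: p_def km add.commute)
  qed
  have degS: "degree (S_poly \<alpha> n) \<le> n"
    unfolding S_poly_def by (intro degree_sum_le order_trans[OF degree_monom_le]) auto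
  have degp: "degree p \<le> K"
  proof -
    have "degree p \<le> degree (S_poly \<alpha> n) + degree ([:1,1:] ^ m :: complex poly)"
      unfolding p_def by (rule degree_mult_le)
    also have "degree ([:1,1:] ^ m :: complex poly) \<le> m"
      by (rule order_trans[OF degree_power_le]) simp
    finally show ?thesis using degS Kn by (simp add: m_def)
  qed
  define q where "q = (\<Sum>i\<le>K. monom (coeff p (K - i)) i)"
  have palin: "poly p x = (-1) ^ n * x ^ K * poly p (inverse x)"
    if R: "prop_R \<alpha>" and x0: "x \<noteq> 0" and x1: "x \<noteq> -1" for x
  proof -
    have w: "x + 1 \<noteq> 0" using x1 by (metis eq_neg_iff_add_eq_0)
    have ix: "inverse x \<noteq> -1" using x1 by (metis inverse_minus_eq inverse_1 inverse_inverse_eq)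
    have e1: "poly p x = (x + 1) ^ K * A \<alpha> n (inverse (x + 1))"
      using pv[OF x1] by (simp add: A_star_def kK)
    have e2: "poly p (inverse x) = (inverse x + 1) ^ K * A \<alpha> n (inverse (inverse x + 1))"
      using pv[OF ix] by (simp add: A_star_def kK)
    have i2: "inverse (inverse x + 1) = 1 - inverse (x + 1)"
      using x0 w by (simp add: field_simps)
    have RR: "A \<alpha> n (1 - inverse (x + 1)) = (-1) ^ n * A \<alpha> n (inverse (x + 1))"
      using R unfolding prop_R_def by blast
    have xi: "x ^ K * (inverse x + 1) ^ K = (x + 1) ^ K"
      using x0 by (simp flip: power_mult_distrib add: field_simps)
    have "(-1) ^ n * x ^ K * poly p (inverse x)
        = ((-1) ^ n * (-1) ^ n) * (x ^ K * (inverse x + 1) ^ K) * A \<alpha> n (inverse (x + 1))"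
      unfolding e2 i2 RR by (simp add: mult_ac)
    also have "((-1) ^ n * (-1) ^ n :: complex) = 1"
      by (simp flip: power_add)
    finally show ?thesis using e1 xi by simp
  qed
  have pq: "p = smult ((-1) ^ n) q" if R: "prop_R \<alpha>"
    by (rule poly_eq_cofinite) (simp add: palin[OF R] q_def reflect_eq[OF degp])
  show ?thesis
  proof (intro exI conjI impI allI)
    show "fps_of_poly p = S_fps \<alpha> n k" by (rule fp)
    show "poly p x = A_star \<alpha> n k (x + 1)" if "x \<noteq> -1" for x using pv that by blast
    show "poly p x = (-1) ^ n * x ^ nat k * poly p (inverse x)" if R: "prop_R \<alpha>" and "x \<noteq> 0" for x
      using that by (subst pq[OF R]) (simp add: q_def reflect_eq[OF degp] flip: K_def)
  next
    assume H: "prop_R \<alpha> \<and> odd n \<and> even k"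
    hence eK: "even K" by (simp add: kK)
    have "coeff p (K div 2) = (-1) ^ n * coeff q (K div 2)"
      using pq H by simp
    also have "coeff q (K div 2) = coeff p (K - K div 2)"
      unfolding q_def by (simp add: coeff_sum coeff_monom)
    also have "K - K div 2 = K div 2" using eK by auto
    finally have "coeff p (K div 2) = - coeff p (K div 2)" using H by simp
    thus "coeff p (nat k div 2) = 0" by (simp add: K_def)
  qed
qed

theorem mainTheorem6:
  fixes \<alpha> :: "nat \<Rightarrow> complex" and n :: nat and k :: int
  shows
    "(\<forall>x::complex. norm x < 1 \<longrightarrow>
        (\<lambda>l. fps_nth (S_fps \<alpha> n k) l * x ^ l) sums A_star \<alpha> n k (x + 1))
   \<and> (k \<ge> int n \<longrightarrow>
        (\<exists>p. fps_of_poly p = S_fps \<alpha> n k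
           \<and> (\<forall>x. x \<noteq> -1 \<longrightarrow> poly p x = A_star \<alpha> n k (x + 1))
           \<and> (prop_R \<alpha> \<longrightarrow>
                (\<forall>x. x \<noteq> 0 \<longrightarrow> poly p x = (-1) ^ n * x ^ nat k * poly p (inverse x)))
           \<and> (prop_R \<alpha> \<and> odd n \<and> even k \<longrightarrow> coeff p (nat k div 2) = 0)))
   \<and> (\<forall>l::nat. l \<le> n \<and> int l \<le> k \<longrightarrow>
        fps_nth (S_fps \<alpha> n k) l = (deriv ^^ l) (A_star \<alpha> n k) 1 / fact l
      \<and> (deriv ^^ l) (A_star \<alpha> n k) 1 / fact l
          = (\<Sum>\<nu>\<le>l. (of_int (k - int n) gchoose (l - \<nu>)) * s \<alpha> n \<nu>))"
proof (intro conjI allI impI)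
  fix x :: complex assume "norm x < 1"
  thus "(\<lambda>l. fps_nth (S_fps \<alpha> n k) l * x ^ l) sums A_star \<alpha> n k (x + 1)" by (rule part1)
next
  assume "k \<ge> int n"
  thus "\<exists>p. fps_of_poly p = S_fps \<alpha> n k
           \<and> (\<forall>x. x \<noteq> -1 \<longrightarrow> poly p x = A_star \<alpha> n k (x + 1))
           \<and> (prop_R \<alpha> \<longrightarrow>
                (\<forall>x. x \<noteq> 0 \<longrightarrow> poly p x = (-1) ^ n * x ^ nat k * poly p (inverse x)))
           \<and> (prop_R \<alpha> \<and> odd n \<and> even k \<longrightarrow> coeff p (nat k div 2) = 0)" by (rule part2)
next
  fix l :: nat
  show "fps_nth (S_fps \<alpha> n k) l = (deriv ^^ l) (A_star \<alpha> n k) 1 / fact l" by (rule part3a)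
  assume "l \<le> n \<and> int l \<le> k"
  thus "(deriv ^^ l) (A_star \<alpha> n k) 1 / fact l
          = (\<Sum>\<nu>\<le>l. (of_int (k - int n) gchoose (l - \<nu>)) * s \<alpha> n \<nu>)"
    using part3a[of \<alpha> n k l] part3b[of l n \<alpha> k] by simp
qed

end
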